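(* Let $A,B$ be finite-dimensional quantum systems. Let $\mathcal{E}_1$ be a doubly stochastic quantum operation on $AB$ (trace-preserving and unital, $\mathcal{E}_1(I)=I$), and let $\mathcal{E}_2$ be an arbitrary trace-preserving quantum operation on $AB$. Then $$R_r(\mathcal{E}_1\circ\mathcal{E}_2)\leq R_r(\mathcal{E}_1)+R_r(\mathcal{E}_2)+R_r(\mathcal{E}_1)R_r(\mathcal{E}_2).$$
   Context: A quantum operation (completely positive map) $\mathcal{E}$ on $AB$ is separable if it has an operator-sum representation $\mathcal{E}(\rho)=\sum_j(A_j\otimes B_j)\rho(A_j^\dagger\otimes B_j^\dagger)$. For trace-preserving quantum operations $\mathcal{E},\mathcal{F}$ on $AB$, $R(\mathcal{E}\|\mathcal{F})$ is the minimal $t\geq0$ such that $\mathcal{E}+t\mathcal{F}$ is separable, and the random robustness is $R_r(\mathcal{E})=R(\mathcal{E}\|\mathcal{D})$ with $\mathcal{D}(\rho)=\mathrm{tr}(\rho)\,I/(d_Ad_B)$, $d_A,d_B$ the dimensions of $A,B$. *)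

theory Defs
  imports "HOL-Analysis.Analysis"
begin

text \<open>Operators on a finite-dimensional Hilbert space with orthonormal basis indexed
by the finite type 'n are complex matrices of type complex^'n^'n.
System A is indexed by 'a, system B by 'b, the composite AB by ('a \<times> 'b).\<close>

type_synonym 'n cmat = "complex^'n^'n"

definition cadj :: "('n::finite) cmat \<Rightarrow> 'n cmat" where
  "cadj M = (\<chi> i j. cnj (M $ j $ i))"

definition ktensor :: "('a::finite) cmat \<Rightarrow> ('b::finite) cmat \<Rightarrow> ('a \<times> 'b) cmat" where
  "ktensor X Y = (\<chi> p q. X $ fst p $ fst q * Y $ snd p $ snd q)"

text \<open>Quantum operation (completely positive map) given by a finite operator-sum
(Kraus) representation.\<close>
definition kraus_map :: "('n::finite) cmat list \<Rightarrow> 'n cmat \<Rightarrow> 'n cmat" where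
  "kraus_map Ks \<rho> = (\<Sum>K\<leftarrow>Ks. K ** \<rho> ** cadj K)"

definition quantum_operation :: "(('n::finite) cmat \<Rightarrow> 'n cmat) \<Rightarrow> bool" where
  "quantum_operation E \<longleftrightarrow> (\<exists>Ks. E = kraus_map Ks)"

definition trace_preserving :: "(('n::finite) cmat \<Rightarrow> 'n cmat) \<Rightarrow> bool" where
  "trace_preserving E \<longleftrightarrow> (\<forall>\<rho>. trace (E \<rho>) = trace \<rho>)"

definition tp_operation :: "(('n::finite) cmat \<Rightarrow> 'n cmat) \<Rightarrow> bool" where
  "tp_operation E \<longleftrightarrow> quantum_operation E \<and> trace_preserving E"

definition doubly_stochastic :: "(('n::finite) cmat \<Rightarrow> 'n cmat) \<Rightarrow> bool" where
  "doubly_stochastic E \<longleftrightarrow> tp_operation E \<and> E (mat 1) = mat 1"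

definition separable_op ::
  "((('a::finite) \<times> ('b::finite)) cmat \<Rightarrow> ('a \<times> 'b) cmat) \<Rightarrow> bool" where
  "separable_op E \<longleftrightarrow>
     (\<exists>ABs :: ('a cmat \<times> 'b cmat) list.
        \<forall>\<rho>. E \<rho> = (\<Sum>(X,Y)\<leftarrow>ABs. ktensor X Y ** \<rho> ** cadj (ktensor X Y)))"

definition rel_robustness ::
  "((('a::finite) \<times> ('b::finite)) cmat \<Rightarrow> ('a \<times> 'b) cmat) \<Rightarrow>
   (('a \<times> 'b) cmat \<Rightarrow> ('a \<times> 'b) cmat) \<Rightarrow> real" where
  "rel_robustness E F = Inf {t::real. t \<ge> 0 \<and> separable_op (\<lambda>\<rho>. E \<rho> + t *\<^sub>R F \<rho>)}"

definition depolarizing :: "(('a::finite) \<times> ('b::finite)) cmat \<Rightarrow> ('a \<times> 'b) cmat" where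
  "depolarizing \<rho> = mat (trace \<rho> / of_nat (CARD('a) * CARD('b)))"

definition random_robustness ::
  "((('a::finite) \<times> ('b::finite)) cmat \<Rightarrow> ('a \<times> 'b) cmat) \<Rightarrow> real" where
  "random_robustness E = rel_robustness E (depolarizing :: ('a \<times> 'b) cmat \<Rightarrow> _)"

end

theory Submission imports Defs begin

definition smul :: "complex \<Rightarrow> ('n::finite) cmat \<Rightarrow> 'n cmat" where
  "smul c M = (\<chi> i j. c * M$i$j)"

definition U :: "'n \<Rightarrow> 'n \<Rightarrow> ('n::finite) cmat" where
  "U p q = (\<chi> i j. if i = p \<and> j = q then 1 else 0)"

definition phi :: "('n::finite) cmat \<Rightarrow> 'n cmat \<Rightarrow> 'n cmat" where
  "phi W \<rho> = W ** \<rho> ** cadj W"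

definition bf :: "('n::finite) cmat \<Rightarrow> 'n cmat \<Rightarrow> 'n cmat \<Rightarrow> 'n cmat" where
  "bf W V \<rho> = W ** \<rho> ** cadj V"

lemma smul_nth[simp]: "smul c M $ i $ j = c * M$i$j" by (simp add: smul_def)
lemma U_nth[simp]: "U p q $ i $ j = (if i = p \<and> j = q then 1 else 0)" by (simp add: U_def)
lemma cadj_nth[simp]: "cadj M $ i $ j = cnj (M$j$i)" by (simp add: cadj_def)
lemma ktensor_nth[simp]: "ktensor X Y $ p $ q = X $ fst p $ fst q * Y $ snd p $ snd q"
  by (simp add: ktensor_def)
lemma mm_nth: "(A ** B)$i$j = (\<Sum>k\<in>UNIV. A$i$k * B$k$j)"
  by (simp add: matrix_matrix_mult_def)

lemma mm_add_r: "((A::complex^'n^'m) + B) ** C = A ** C + B ** C"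
  by (simp add: vec_eq_iff mm_nth algebra_simps sum.distrib)
lemma mm_add_l: "(A::complex^'n^'m) ** (B + C) = A ** B + A ** C"
  by (simp add: vec_eq_iff mm_nth algebra_simps sum.distrib)
lemma mm_minus_r: "(- (A::complex^'n^'m)) ** C = - (A ** C)"
  by (simp add: vec_eq_iff mm_nth sum_negf)
lemma mm_minus_l: "(A::complex^'n^'m) ** (- B) = - (A ** B)"
  by (simp add: vec_eq_iff mm_nth sum_negf)
lemma mm_diff_r: "((A::complex^'n^'m) - B) ** C = A ** C - B ** C"
  by (simp add: vec_eq_iff mm_nth algebra_simps sum_subtractf)
lemma mm_diff_l: "(A::complex^'n^'m) ** (B - C) = A ** B - A ** C"
  by (simp add: vec_eq_iff mm_nth algebra_simps sum_subtractf)
lemma mm_smul_l: "smul c A ** B = smul c (A ** B)"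
  by (simp add: vec_eq_iff mm_nth sum_distrib_left mult.assoc)
lemma mm_smul_r: "A ** smul c B = smul c (A ** B)"
  by (simp add: vec_eq_iff mm_nth sum_distrib_left algebra_simps)
lemma mm_sum_r: "(A::complex^'n^'m) ** sum g S = (\<Sum>y\<in>S. A ** g y)"
  by (simp add: vec_eq_iff mm_nth sum_distrib_left) (subst sum.swap, simp)
lemma mm_sum_l: "sum g S ** (A::complex^'n^'m) = (\<Sum>y\<in>S. g y ** A)"
  by (simp add: vec_eq_iff mm_nth sum_distrib_right) (subst sum.swap, simp)

lemma cadj_add: "cadj (A + B) = cadj A + cadj B" by (simp add: vec_eq_iff)
lemma cadj_minus: "cadj (- A) = - cadj A" by (simp add: vec_eq_iff)
lemma cadj_diff: "cadj (A - B) = cadj A - cadj B" by (simp add: vec_eq_iff)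
lemma cadj_smul: "cadj (smul c A) = smul (cnj c) (cadj A)" by (simp add: vec_eq_iff)
lemma cadj_sum: "cadj (sum g S) = (\<Sum>y\<in>S. cadj (g y))" by (simp add: vec_eq_iff)
lemma cadj_mm: "cadj (A ** B) = cadj B ** cadj A"
  by (simp add: vec_eq_iff mm_nth mult.commute)
lemma cadj_U: "cadj (U p q) = U q p" by (simp add: vec_eq_iff)
lemma cadj_ktensor: "cadj (ktensor X Y) = ktensor (cadj X) (cadj Y)" by (simp add: vec_eq_iff)

lemma smul_add: "smul c (A + B) = smul c A + smul c B" by (simp add: vec_eq_iff algebra_simps)
lemma smul_smul: "smul a (smul b A) = smul (a*b) A" by (simp add: vec_eq_iff)
lemma smul_one: "smul 1 A = A" by (simp add: vec_eq_iff)
lemma smul_m1: "smul (-1) A = - A" by (simp add: vec_eq_iff)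
lemma scaleR_smul: "r *\<^sub>R (A::('n::finite) cmat) = smul (of_real r) A"
  by (simp add: vec_eq_iff scaleR_conv_of_real[where 'a=complex])

lemma ktensor_add_l: "ktensor (X + X') Y = ktensor X Y + ktensor X' Y"
  by (simp add: vec_eq_iff algebra_simps)
lemma ktensor_add_r: "ktensor X (Y + Y') = ktensor X Y + ktensor X Y'"
  by (simp add: vec_eq_iff algebra_simps)
lemma ktensor_smul_l: "ktensor (smul c X) Y = smul c (ktensor X Y)"
  by (simp add: vec_eq_iff algebra_simps)
lemma ktensor_U: "ktensor (U a a') (U b b') = U (a,b) (a',b')"
  by (auto simp add: vec_eq_iff)
lemma ktensor_mm: "ktensor X Y ** ktensor X' Y' = ktensor (X ** X') (Y ** Y')"
proof -
  have "(\<Sum>k\<in>UNIV. X $ a $ fst k * Y $ b $ snd k * (X' $ fst k $ a' * Y' $ snd k $ b')) =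
        (\<Sum>k1\<in>UNIV. X $ a $ k1 * X' $ k1 $ a') * (\<Sum>k2\<in>UNIV. Y $ b $ k2 * Y' $ k2 $ b')"
    for a b a' b'
    by (simp add: sum_product UNIV_Times_UNIV[symmetric] sum.cartesian_product algebra_simps case_prod_unfold
          del: UNIV_Times_UNIV)
  then show ?thesis by (simp add: vec_eq_iff mm_nth)
qed

lemma phi_add: "phi (W + V) \<rho> = phi W \<rho> + phi V \<rho> + bf W V \<rho> + bf V W \<rho>"
  by (simp add: phi_def bf_def cadj_add mm_add_l mm_add_r algebra_simps)
lemma phi_diff: "phi (W - V) \<rho> = phi W \<rho> + phi V \<rho> - bf W V \<rho> - bf V W \<rho>"
  by (simp add: phi_def bf_def cadj_diff mm_diff_l mm_diff_r algebra_simps)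
lemma phi_smul: "phi (smul c W) \<rho> = smul (c * cnj c) (phi W \<rho>)"
  by (simp add: phi_def cadj_smul mm_smul_l mm_smul_r smul_smul mult.commute)
lemma phi_smul_real: "phi (smul c W) \<rho> = (cmod c)^2 *\<^sub>R (phi W \<rho>)"
  by (simp only: phi_smul scaleR_smul complex_norm_square)

definition sepK :: "(('a::finite) cmat \<times> ('b::finite) cmat) list \<Rightarrow> ('a \<times> 'b) cmat \<Rightarrow> ('a \<times> 'b) cmat" where
  "sepK L \<rho> = (\<Sum>(X,Y)\<leftarrow>L. ktensor X Y ** \<rho> ** cadj (ktensor X Y))"

lemma sep_iff: "separable_op f \<longleftrightarrow> (\<exists>L. \<forall>\<rho>. f \<rho> = sepK L \<rho>)"
  by (simp add: separable_op_def sepK_def)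

lemma sepK_Nil[simp]: "sepK [] \<rho> = 0" by (simp add: sepK_def)
lemma sepK_Cons[simp]: "sepK ((X,Y)#L) \<rho> = phi (ktensor X Y) \<rho> + sepK L \<rho>"
  by (simp add: sepK_def phi_def)
lemma sepK_append: "sepK (L1 @ L2) \<rho> = sepK L1 \<rho> + sepK L2 \<rho>"
  by (simp add: sepK_def)

lemma sep_cong: "separable_op f \<Longrightarrow> (\<And>\<rho>. g \<rho> = f \<rho>) \<Longrightarrow> separable_op g"
  by (simp add: sep_iff)

lemma sep_zero: "separable_op (\<lambda>\<rho>. 0)"
  unfolding sep_iff by (rule exI[of _ "[]"]) simp

lemma sep_add: "separable_op f \<Longrightarrow> separable_op g \<Longrightarrow> separable_op (\<lambda>\<rho>. f \<rho> + g \<rho>)"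
  unfolding sep_iff by (metis sepK_append)

lemma sep_phi: "separable_op (\<lambda>\<rho>. phi (ktensor X Y) \<rho>)"
  unfolding sep_iff by (rule exI[of _ "[(X,Y)]"]) simp

lemma sepK_scale: "sepK (map (\<lambda>(X,Y). (smul c X, Y)) L) \<rho> = smul (c * cnj c) (sepK L \<rho>)"
proof (induction L)
  case Nil then show ?case by (simp add: vec_eq_iff)
next
  case (Cons a L) then show ?case
    by (cases a) (simp add: ktensor_smul_l phi_smul smul_add)
qed

lemma sep_scale: assumes "separable_op f" "r \<ge> 0"
  shows "separable_op (\<lambda>\<rho>. r *\<^sub>R f \<rho>)"
proof -
  obtain L where L: "\<And>\<rho>. f \<rho> = sepK L \<rho>" using assms(1) by (auto simp: sep_iff)
  let ?c = "complex_of_real (sqrt r)"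
  have "?c * cnj ?c = of_real r" using assms(2)
    by (simp flip: of_real_mult)
  then show ?thesis unfolding sep_iff
    by (intro exI[of _ "map (\<lambda>(X,Y). (smul ?c X, Y)) L"]) (simp add: sepK_scale L scaleR_smul)
qed

lemma sep_sum: "finite S \<Longrightarrow> (\<And>x. x \<in> S \<Longrightarrow> separable_op (f x)) \<Longrightarrow>
   separable_op (\<lambda>\<rho>. \<Sum>x\<in>S. f x \<rho>)"
proof (induction S rule: finite_induct)
  case empty then show ?case by (simp add: sep_zero)
next
  case (insert x F) then show ?case
    by (simp add: sep_add)
qed

lemma phi_mm: "phi (A ** B) \<rho> = phi A (phi B \<rho>)"
  by (simp add: phi_def cadj_mm matrix_mul_assoc)

lemma phi_sepK: "phi (ktensor X Y) (sepK L \<rho>) =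
   sepK (map (\<lambda>(X',Y'). (X ** X', Y ** Y')) L) \<rho>"
proof (induction L)
  case Nil then show ?case by (simp add: phi_def)
next
  case (Cons a L) then show ?case
    by (cases a) (simp add: phi_def mm_add_l mm_add_r ktensor_mm[symmetric] cadj_mm matrix_mul_assoc)
qed

lemma sep_comp: assumes "separable_op f" "separable_op g"
  shows "separable_op (\<lambda>\<rho>. f (g \<rho>))"
proof -
  obtain L1 where L1: "\<And>\<rho>. f \<rho> = sepK L1 \<rho>" using assms(1) by (auto simp: sep_iff)
  obtain L2 where L2: "\<And>\<rho>. g \<rho> = sepK L2 \<rho>" using assms(2) by (auto simp: sep_iff)
  have "sepK L1 (sepK L2 \<rho>) =
     sepK (concat (map (\<lambda>(X,Y). map (\<lambda>(X',Y'). (X ** X', Y ** Y')) L2) L1)) \<rho>" for \<rho>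
  proof (induction L1)
    case Nil then show ?case by simp
  next
    case (Cons a L1) then show ?case
      by (cases a) (simp add: sepK_append phi_sepK)
  qed
  then show ?thesis unfolding sep_iff L1 L2 by blast
qed

lemma U_mm: "U p q ** M = (\<chi> i j. if i = p then M$q$j else 0)"
  by (simp add: vec_eq_iff mm_nth if_distrib if_distribR sum.delta cong: if_cong)
lemma mm_U: "M ** U p q = (\<chi> i j. if j = q then M$i$p else 0)"
  by (simp add: vec_eq_iff mm_nth if_distrib if_distribR sum.delta cong: if_cong)

lemma phi_U: "phi (U p q) \<rho> = (\<chi> i j. if i = p \<and> j = p then \<rho>$q$q else 0)"
  by (simp add: phi_def cadj_U U_mm mm_U vec_eq_iff)

lemma sum_phi_U: "(\<Sum>x\<in>UNIV. phi (U (fst x) (snd x)) \<rho>) = mat (trace (\<rho>::('n::finite) cmat))"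
proof -
  have "(\<Sum>x\<in>(UNIV::('n\<times>'n) set). if i = fst x \<and> j = fst x then \<rho>$snd x$snd x else 0)
     = (if i = j then trace \<rho> else 0)" for i j
  proof -
    have "(\<Sum>x\<in>(UNIV::('n\<times>'n) set). if i = fst x \<and> j = fst x then \<rho>$snd x$snd x else 0)
       = (\<Sum>p\<in>UNIV. \<Sum>q\<in>UNIV. if i = p \<and> j = p then \<rho>$q$q else 0)"
      by (simp add: UNIV_Times_UNIV[symmetric] sum.cartesian_product case_prod_unfold del: UNIV_Times_UNIV)
    also have "\<dots> = (\<Sum>p\<in>UNIV. if i = p \<and> j = p then trace \<rho> else 0)"
      by (rule sum.cong) (auto simp: trace_def)
    also have "\<dots> = (if i = j then trace \<rho> else 0)"
      by (cases "i = j") (auto intro: sum.neutral)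
    finally show ?thesis .
  qed
  then show ?thesis by (simp add: vec_eq_iff phi_U mat_def)
qed

definition dd :: "real" where "dd = real (CARD('a::finite) * CARD('b::finite))"

lemma card_pos: "0 < CARD('a::finite)" by simp

lemma D_eq: "(depolarizing :: ('a::finite \<times> 'b::finite) cmat \<Rightarrow> _) \<rho> =
   (1 / real (CARD('a) * CARD('b))) *\<^sub>R (\<Sum>x\<in>UNIV. phi (U (fst x) (snd x)) \<rho>)"
  by (simp add: sum_phi_U depolarizing_def vec_eq_iff mat_def scaleR_conv_of_real[where 'a=complex])

lemma sep_D: "t \<ge> 0 \<Longrightarrow> separable_op (\<lambda>\<rho>. t *\<^sub>R (depolarizing :: ('a::finite \<times> 'b::finite) cmat \<Rightarrow> _) \<rho>)"
  unfolding D_eq scaleR_scaleR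
  by (rule sep_scale) (auto intro!: sep_sum simp: ktensor_U[symmetric] sep_phi)

definition good :: "(('a::finite \<times> 'b::finite) cmat \<Rightarrow> ('a \<times> 'b) cmat) \<Rightarrow> bool" where
  "good f \<longleftrightarrow> (\<exists>t\<ge>0. separable_op (\<lambda>\<rho>. f \<rho> + t *\<^sub>R depolarizing \<rho>))"

lemma good_cong: "good f \<Longrightarrow> (\<And>\<rho>. g \<rho> = f \<rho>) \<Longrightarrow> good g"
  by (simp add: good_def)

lemma good_sep: "separable_op f \<Longrightarrow> good f"
  unfolding good_def by (intro exI[of _ 0]) (auto intro: sep_cong)

lemma good_add: assumes "good f" "good g" shows "good (\<lambda>\<rho>. f \<rho> + g \<rho>)"
proof -
  obtain t1 where t1: "t1 \<ge> 0" "separable_op (\<lambda>\<rho>. f \<rho> + t1 *\<^sub>R depolarizing \<rho>)"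
    using assms(1) good_def by blast
  obtain t2 where t2: "t2 \<ge> 0" "separable_op (\<lambda>\<rho>. g \<rho> + t2 *\<^sub>R depolarizing \<rho>)"
    using assms(2) good_def by blast
  show ?thesis unfolding good_def
    apply (rule exI[of _ "t1 + t2"])
    using t1 t2 by (auto intro: sep_cong[OF sep_add[OF t1(2) t2(2)]] simp: scaleR_add_left)
qed

lemma good_scale: assumes "good f" "r \<ge> 0" shows "good (\<lambda>\<rho>. r *\<^sub>R f \<rho>)"
proof -
  obtain t where t: "t \<ge> 0" "separable_op (\<lambda>\<rho>. f \<rho> + t *\<^sub>R depolarizing \<rho>)"
    using assms(1) good_def by blast
  show ?thesis unfolding good_def
    apply (rule exI[of _ "r * t"])
    using t assms(2) by (auto intro: sep_cong[OF sep_scale[OF t(2) assms(2)]] simp: scaleR_add_right)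
qed

lemma good_sum: "finite S \<Longrightarrow> (\<And>x. x \<in> S \<Longrightarrow> good (f x)) \<Longrightarrow>
   good (\<lambda>\<rho>. \<Sum>x\<in>S. f x \<rho>)"
proof (induction S rule: finite_induct)
  case empty then show ?case by (simp add: good_sep sep_zero)
next
  case (insert x F) then show ?case
    by (simp add: good_add)
qed

lemma dominated: "good (\<lambda>\<rho>. - phi (smul c (U x0 y0 :: ('a::finite \<times> 'b::finite) cmat)) \<rho>)"
proof -
  let ?d = "real (CARD('a) * CARD('b))"
  have dpos: "?d > 0" by simp
  let ?x0 = "(x0, y0)"
  have "- phi (smul c (U x0 y0)) \<rho> + (?d * (cmod c)^2) *\<^sub>R depolarizing \<rho> =
        (cmod c)^2 *\<^sub>R (\<Sum>x\<in>UNIV - {?x0}. phi (U (fst x) (snd x)) \<rho>)" for \<rho>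
  proof -
    have "(?d * (cmod c)^2) *\<^sub>R depolarizing \<rho> = (cmod c)^2 *\<^sub>R (\<Sum>x\<in>UNIV. phi (U (fst x) (snd x)) \<rho>)"
      using dpos by (simp add: D_eq)
    also have "(\<Sum>x\<in>UNIV. phi (U (fst x) (snd x)) \<rho>) = phi (U x0 y0) \<rho> + (\<Sum>x\<in>UNIV - {?x0}. phi (U (fst x) (snd x)) \<rho>)"
      by (subst sum.remove[of UNIV ?x0]) auto
    finally show ?thesis by (simp add: phi_smul_real scaleR_add_right)
  qed
  moreover have "separable_op (\<lambda>\<rho>. (cmod c)^2 *\<^sub>R (\<Sum>x\<in>UNIV - {?x0}. phi (U (fst x) (snd x)) \<rho>))"
    by (rule sep_scale) (auto intro!: sep_sum simp: ktensor_U[symmetric] sep_phi)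
  ultimately show ?thesis unfolding good_def using dpos
    by (intro exI[of _ "?d * (cmod c)^2"]) (auto intro: sep_cong)
qed

lemma parallelogram: "phi (P + Q) \<rho> + phi (P - Q) \<rho> = 2 *\<^sub>R (phi P \<rho> + phi Q \<rho>)"
  by (simp add: phi_add phi_diff scaleR_2 algebra_simps)

lemma phi_smul_i: "phi (smul \<i> W) \<rho> = phi W \<rho>"
  by (simp add: phi_smul smul_one)

lemma aux4:
  fixes p1 :: "'v::real_vector"
  assumes "p1 + p2 = 2 *\<^sub>R (s + u)" "q1 + q2 = 2 *\<^sub>R (s + w)" "u + w = 2 *\<^sub>R (r + t)"
  shows "p1 + p2 + q1 + q2 = 4 *\<^sub>R (s + r + t)"
proof -
  have "p1 + p2 + q1 + q2 = (p1 + p2) + (q1 + q2)" by (simp add: add.assoc)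
  also have "\<dots> = 2 *\<^sub>R (s + u) + 2 *\<^sub>R (s + w)" using assms by simp
  also have "\<dots> = 4 *\<^sub>R s + 2 *\<^sub>R (u + w)" by (simp add: scaleR_add_right algebra_simps flip: scaleR_add_left)
  also have "\<dots> = 4 *\<^sub>R (s + r + t)" using assms(3) by (simp add: scaleR_add_right algebra_simps)
  finally show ?thesis .
qed

lemma four_term:
  fixes X X' :: "('a::finite) cmat" and Y Y' :: "('b::finite) cmat"
  defines "A \<equiv> ktensor X Y" and "B \<equiv> ktensor X' Y'" and "R \<equiv> ktensor X' Y" and "T \<equiv> ktensor X Y'"
  shows "phi (ktensor (X + X') (Y + Y')) \<rho> + phi (ktensor (X - X') (Y - Y')) \<rho>
       + phi (ktensor (X + smul \<i> X') (Y - smul \<i> Y')) \<rho> + phi (ktensor (X - smul \<i> X') (Y + smul \<i> Y')) \<rho>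
       = 4 *\<^sub>R (phi (A + B) \<rho> + phi R \<rho> + phi T \<rho>)"
proof -
  have z1: "ktensor (X + X') (Y + Y') = (A + B) + (R + T)"
    by (simp add: A_def B_def R_def T_def vec_eq_iff algebra_simps)
  have z2: "ktensor (X - X') (Y - Y') = (A + B) - (R + T)"
    by (simp add: A_def B_def R_def T_def vec_eq_iff algebra_simps)
  have z3: "ktensor (X + smul \<i> X') (Y - smul \<i> Y') = (A + B) + smul \<i> (R - T)"
    by (simp add: A_def B_def R_def T_def vec_eq_iff algebra_simps)
  have z4: "ktensor (X - smul \<i> X') (Y + smul \<i> Y') = (A + B) - smul \<i> (R - T)"
    by (simp add: A_def B_def R_def T_def vec_eq_iff algebra_simps)
  have "phi (R + T) \<rho> + phi (R - T) \<rho> = 2 *\<^sub>R (phi R \<rho> + phi T \<rho>)"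
    by (rule parallelogram)
  moreover have "phi ((A + B) + (R + T)) \<rho> + phi ((A + B) - (R + T)) \<rho> = 2 *\<^sub>R (phi (A+B) \<rho> + phi (R + T) \<rho>)"
    by (rule parallelogram)
  moreover have "phi ((A + B) + smul \<i> (R - T)) \<rho> + phi ((A + B) - smul \<i> (R - T)) \<rho> = 2 *\<^sub>R (phi (A+B) \<rho> + phi (R - T) \<rho>)"
    by (simp only: parallelogram phi_smul_i)
  ultimately show ?thesis unfolding z1 z2 z3 z4
    by (rule aux4[rotated 2])
qed

lemma unit_kt: "smul c (U p q :: ('a::finite \<times> 'b::finite) cmat) =
   ktensor (smul c (U (fst p) (fst q))) (U (snd p) (snd q))"
  by (simp add: ktensor_smul_l ktensor_U)

lemma good_phi_unit: "good (\<lambda>\<rho>. phi (smul c (U p q :: ('a::finite \<times> 'b::finite) cmat)) \<rho>)"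
  by (subst unit_kt) (rule good_sep[OF sep_phi])

lemma pair_good: "good (\<lambda>\<rho>. phi (smul c1 (U p1 q1) + smul c2 (U p2 q2) :: ('a::finite \<times> 'b::finite) cmat) \<rho>)"
proof -
  define X where "X = smul c1 (U (fst p1) (fst q1) :: 'a cmat)"
  define Y where "Y = (U (snd p1) (snd q1) :: 'b cmat)"
  define X' where "X' = smul c2 (U (fst p2) (fst q2) :: 'a cmat)"
  define Y' where "Y' = (U (snd p2) (snd q2) :: 'b cmat)"
  have A: "ktensor X Y = smul c1 (U p1 q1)" by (simp add: X_def Y_def ktensor_smul_l ktensor_U)
  have B: "ktensor X' Y' = smul c2 (U p2 q2)" by (simp add: X'_def Y'_def ktensor_smul_l ktensor_U)
  have R: "ktensor X' Y = smul c2 (U (fst p2, snd p1) (fst q2, snd q1))" by (simp add: X'_def Y_def ktensor_smul_l ktensor_U)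
  have T: "ktensor X Y' = smul c1 (U (fst p1, snd p2) (fst q1, snd q2))" by (simp add: X_def Y'_def ktensor_smul_l ktensor_U)
  let ?Z = "\<lambda>\<rho>. phi (ktensor (X + X') (Y + Y')) \<rho> + phi (ktensor (X - X') (Y - Y')) \<rho>
       + phi (ktensor (X + smul \<i> X') (Y - smul \<i> Y')) \<rho> + phi (ktensor (X - smul \<i> X') (Y + smul \<i> Y')) \<rho>"
  have eq: "phi (smul c1 (U p1 q1) + smul c2 (U p2 q2)) \<rho> =
     (1/4) *\<^sub>R ?Z \<rho> + (- phi (smul c2 (U (fst p2, snd p1) (fst q2, snd q1))) \<rho>)
       + (- phi (smul c1 (U (fst p1, snd p2) (fst q1, snd q2))) \<rho>)" for \<rho>
    unfolding four_term A B R T by simp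
  have gZ: "good (\<lambda>\<rho>. (1/4) *\<^sub>R ?Z \<rho>)"
    by (intro good_scale good_sep sep_add sep_phi) auto
  show ?thesis
    by (rule good_cong[OF _ eq]) (intro good_add gZ dominated)
qed

lemma cross_good: "good (\<lambda>\<rho>. bf (smul c1 (U p1 q1)) (smul c2 (U p2 q2)) \<rho>
     + bf (smul c2 (U p2 q2)) (smul c1 (U p1 q1 :: ('a::finite \<times> 'b::finite) cmat)) \<rho>)"
proof -
  have "bf (smul c1 (U p1 q1)) (smul c2 (U p2 q2)) \<rho> + bf (smul c2 (U p2 q2)) (smul c1 (U p1 q1 :: ('a \<times> 'b) cmat)) \<rho>
    = phi (smul c1 (U p1 q1) + smul c2 (U p2 q2)) \<rho> + (- phi (smul c1 (U p1 q1)) \<rho>) + (- phi (smul c2 (U p2 q2)) \<rho>)" for \<rho>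
    by (simp add: phi_add)
  then show ?thesis
    by (rule good_cong[rotated]) (intro good_add pair_good dominated)
qed

lemma bf_sum_r: "bf W (sum g S) \<rho> = (\<Sum>y\<in>S. bf W (g y) \<rho>)"
  by (simp add: bf_def cadj_sum mm_sum_r)
lemma bf_sum_l: "bf (sum g S) W \<rho> = (\<Sum>y\<in>S. bf (g y) W \<rho>)"
  by (simp add: bf_def mm_sum_l)

lemma good_sum_units: "finite S \<Longrightarrow>
  good (\<lambda>\<rho>. phi (\<Sum>x\<in>S. smul (c x) (U (fst x) (snd x)) :: ('a::finite \<times> 'b::finite) cmat) \<rho>)"
proof (induction S rule: finite_induct)
  case empty then show ?case by (simp add: phi_def good_sep sep_zero)
next
  case (insert x F)
  let ?f = "\<lambda>x. smul (c x) (U (fst x) (snd x)) :: ('a \<times> 'b) cmat"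
  have "phi (\<Sum>x\<in>insert x F. ?f x) \<rho> = phi (?f x) \<rho> + phi (\<Sum>x\<in>F. ?f x) \<rho>
     + (\<Sum>y\<in>F. bf (?f x) (?f y) \<rho> + bf (?f y) (?f x) \<rho>)" for \<rho>
    by (simp only: sum.insert[OF insert(1,2)] phi_add bf_sum_r bf_sum_l sum.distrib add.assoc)
  then show ?case
    by (rule good_cong[rotated]) (intro good_add good_phi_unit insert(3) good_sum insert(1) cross_good)
qed

lemma K_units: "K = (\<Sum>x\<in>UNIV. smul (K $ fst x $ snd x) (U (fst x) (snd x)))"
proof -
  have "(\<Sum>x\<in>UNIV. K $ fst x $ snd x * (if i = fst x \<and> j = snd x then 1 else 0)) = K $ i $ j" for i j
  proof -
    have "(\<Sum>x\<in>UNIV. K $ fst x $ snd x * (if i = fst x \<and> j = snd x then 1 else 0))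
        = (\<Sum>x\<in>UNIV. if x = (i, j) then K $ i $ j else 0)"
      by (rule sum.cong) auto
    then show ?thesis by simp
  qed
  then show ?thesis by (simp add: vec_eq_iff del: mult_zero_right mult_1_right)
qed

lemma good_phi: "good (\<lambda>\<rho>. phi (K :: ('a::finite \<times> 'b::finite) cmat) \<rho>)"
  by (subst K_units) (rule good_sum_units, simp)

lemma good_kraus: "good (kraus_map (Ks :: ('a::finite \<times> 'b::finite) cmat list))"
proof (induction Ks)
  case Nil then show ?case by (simp add: kraus_map_def good_sep sep_zero)
next
  case (Cons K Ks)
  have "kraus_map (K # Ks) \<rho> = phi K \<rho> + kraus_map Ks \<rho>" for \<rho>
    by (simp add: kraus_map_def phi_def)
  then show ?case by (rule good_cong[rotated]) (intro good_add good_phi Cons)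
qed

lemma kraus_add: "kraus_map Ks (A + B) = kraus_map Ks A + kraus_map Ks B"
  by (induction Ks) (simp_all add: kraus_map_def mm_add_l mm_add_r algebra_simps)

lemma kraus_smul: "kraus_map Ks (smul z A) = smul z (kraus_map Ks A)"
  by (induction Ks) (simp_all add: kraus_map_def mm_smul_l mm_smul_r smul_add, simp add: vec_eq_iff)

lemma kraus_scaleR: "kraus_map Ks (r *\<^sub>R A) = r *\<^sub>R kraus_map Ks A"
  by (simp add: scaleR_smul kraus_smul)

abbreviation DD :: "('a::finite \<times> 'b::finite) cmat \<Rightarrow> ('a \<times> 'b) cmat" where
  "DD \<equiv> depolarizing"

lemma D_add: "DD (A + B) = DD A + DD B"
  by (simp add: depolarizing_def trace_add vec_eq_iff mat_def add_divide_distrib)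

lemma trace_scaleR: "trace (r *\<^sub>R (A::('n::finite) cmat)) = r *\<^sub>R trace A"
  by (simp add: trace_def scaleR_sum_right)

lemma D_scale: "DD (r *\<^sub>R A) = r *\<^sub>R DD A"
  by (simp add: depolarizing_def trace_scaleR vec_eq_iff mat_def scaleR_conv_of_real[where 'a=complex])

lemma D_tp: "trace_preserving E \<Longrightarrow> DD (E \<rho>) = DD \<rho>"
  by (simp add: depolarizing_def trace_preserving_def)

lemma D_D: "DD (DD \<rho>) = DD \<rho>"
proof -
  have "trace (mat z :: ('a \<times> 'b) cmat) = z * of_nat (CARD('a) * CARD('b))" for z
    by (simp add: trace_def mat_def card_prod mult.commute)
  then show ?thesis by (simp add: depolarizing_def)
qed

lemma D_mat: "DD (\<rho>::('a::finite \<times> 'b::finite) cmat) = smul (trace \<rho> / of_nat (CARD('a) * CARD('b))) (mat 1)"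
  by (simp add: depolarizing_def vec_eq_iff mat_def)

lemma E_D: assumes "quantum_operation E" "E (mat 1) = mat 1"
  shows "E (DD \<rho>) = DD \<rho>"
proof -
  obtain Ks where "E = kraus_map Ks" using assms(1) quantum_operation_def by blast
  then show ?thesis using assms(2) by (metis D_mat kraus_smul)
qed

definition SS :: "(('a::finite \<times> 'b::finite) cmat \<Rightarrow> ('a \<times> 'b) cmat) \<Rightarrow> real set" where
  "SS E = {t. t \<ge> 0 \<and> separable_op (\<lambda>\<rho>. E \<rho> + t *\<^sub>R DD \<rho>)}"

lemma rr_eq: "random_robustness E = Inf (SS E)"
  by (simp add: random_robustness_def rel_robustness_def SS_def)

lemma SS_ne: "quantum_operation E \<Longrightarrow> SS E \<noteq> {}"
  using good_kraus unfolding quantum_operation_def good_def SS_def by blast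

lemma SS_bdd: "bdd_below (SS E)"
  unfolding SS_def by (rule bdd_belowI[of _ 0]) auto

lemma SS_comp:
  assumes E1: "doubly_stochastic E1" and E2: "tp_operation E2"
    and s: "s \<in> SS E1" and t: "t \<in> SS E2"
  shows "s + t + s * t \<in> SS (E1 \<circ> E2)"
proof -
  obtain Ks where K: "E1 = kraus_map Ks" using E1
    unfolding doubly_stochastic_def tp_operation_def quantum_operation_def by blast
  have qo: "quantum_operation E1" and un: "E1 (mat 1) = mat 1"
    using E1 unfolding doubly_stochastic_def tp_operation_def by auto
  have tp: "trace_preserving E2" using E2 tp_operation_def by blast
  have s0: "s \<ge> 0" and sep1: "separable_op (\<lambda>\<rho>. E1 \<rho> + s *\<^sub>R DD \<rho>)" using s SS_def by auto
  have t0: "t \<ge> 0" and sep2: "separable_op (\<lambda>\<rho>. E2 \<rho> + t *\<^sub>R DD \<rho>)" using t SS_def by auto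
  have eq: "(E1 \<circ> E2) \<rho> + (s + t + s * t) *\<^sub>R DD \<rho> =
     (E1 (E2 \<rho> + t *\<^sub>R DD \<rho>) + s *\<^sub>R DD (E2 \<rho> + t *\<^sub>R DD \<rho>))" for \<rho>
  proof -
    have "E1 (E2 \<rho> + t *\<^sub>R DD \<rho>) = E1 (E2 \<rho>) + t *\<^sub>R DD \<rho>"
      unfolding K kraus_add kraus_scaleR using E_D[OF qo un] K by simp
    moreover have "DD (E2 \<rho> + t *\<^sub>R DD \<rho>) = DD \<rho> + t *\<^sub>R DD \<rho>"
      by (simp add: D_add D_scale D_D D_tp[OF tp])
    ultimately show ?thesis by (simp add: algebra_simps)
  qed
  have "separable_op (\<lambda>\<rho>. (E1 \<circ> E2) \<rho> + (s + t + s * t) *\<^sub>R DD \<rho>)"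
    by (rule sep_cong[OF sep_comp[OF sep1 sep2]]) (simp only: eq)
  then show ?thesis using s0 t0 unfolding SS_def by simp
qed

theorem proposition5:
  fixes E1 E2 :: "(('a::finite) \<times> ('b::finite)) cmat \<Rightarrow> ('a \<times> 'b) cmat"
  assumes "doubly_stochastic E1"
    and "tp_operation E2"
  shows "random_robustness (E1 \<circ> E2)
           \<le> random_robustness E1 + random_robustness E2
              + random_robustness E1 * random_robustness E2"
proof -
  have qo1: "quantum_operation E1" using assms(1) unfolding doubly_stochastic_def tp_operation_def by auto
  have qo2: "quantum_operation E2" using assms(2) unfolding tp_operation_def by auto
  define R1 where "R1 = Inf (SS E1)"
  define R2 where "R2 = Inf (SS E2)"
  define R where "R = Inf (SS (E1 \<circ> E2))"
  have ne1: "SS E1 \<noteq> {}" and ne2: "SS E2 \<noteq> {}" using SS_ne qo1 qo2 by auto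
  have R1p: "R1 \<ge> 0" unfolding R1_def using ne1 by (intro cInf_greatest) (auto simp: SS_def)
  have R2p: "R2 \<ge> 0" unfolding R2_def using ne2 by (intro cInf_greatest) (auto simp: SS_def)
  have key: "R \<le> s + t + s * t" if "s \<in> SS E1" "t \<in> SS E2" for s t
    unfolding R_def by (rule cInf_lower[OF SS_comp[OF assms that] SS_bdd])
  have "R \<le> R1 + R2 + R1 * R2 + e" if e: "e > 0" for e
  proof -
    define d where "d = min 1 (e / (3 + R1 + R2))"
    have dpos: "d > 0" using e R1p R2p by (simp add: d_def)
    have d1: "d \<le> 1" by (simp add: d_def)
    have pos: "3 + R1 + R2 > 0" using R1p R2p by simp
    have "d * (3 + R1 + R2) \<le> e / (3 + R1 + R2) * (3 + R1 + R2)"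
      using pos by (intro mult_right_mono) (auto simp: d_def)
    then have de: "d * (3 + R1 + R2) \<le> e" using pos by simp
    obtain s where s: "s \<in> SS E1" "s < R1 + d"
      using cInf_lessD[OF ne1, of "R1 + d"] dpos R1_def by auto
    obtain t where t: "t \<in> SS E2" "t < R2 + d"
      using cInf_lessD[OF ne2, of "R2 + d"] dpos R2_def by auto
    have s0: "s \<ge> 0" "t \<ge> 0" using s t SS_def by auto
    have "R \<le> s + t + s * t" by (rule key[OF s(1) t(1)])
    also have "\<dots> \<le> (R1 + d) + (R2 + d) + (R1 + d) * (R2 + d)"
      using s t s0 by (intro add_mono mult_mono) auto
    also have "\<dots> = R1 + R2 + R1 * R2 + d * (2 + R1 + R2 + d)" by (simp add: algebra_simps)
    also have "\<dots> \<le> R1 + R2 + R1 * R2 + d * (3 + R1 + R2)"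
      using dpos d1 by (intro add_left_mono mult_left_mono) auto
    also have "\<dots> \<le> R1 + R2 + R1 * R2 + e" using de by simp
    finally show ?thesis .
  qed
  then have "R \<le> R1 + R2 + R1 * R2" by (rule field_le_epsilon)
  then show ?thesis by (simp add: rr_eq R_def R1_def R2_def)
qed

end
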